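(* Let $D$ be a digraph with $n\ge 2$ vertices and $a$ arcs, and let $\alpha\in[0,1)$. Let $\sigma_{1\alpha}(D)$ be the largest singular value of $A_\alpha(D)$. Then $$\sigma_{1\alpha}(D)\ge \frac{a}{n},$$ with equality if and only if $D$ is $\frac{a}{n}$-regular, i.e. every vertex of $D$ has outdegree $\frac an$ and indegree $\frac an$.
   Context: Digraphs are simple: a finite vertex set and a set of arcs, which are ordered pairs of distinct vertices, with no parallel arcs. For a digraph $D$ on vertices $v_1,\dots,v_n$, the adjacency matrix $A(D)=(a_{ij})$ has $a_{ij}=1$ if $(v_i,v_j)$ is an arc and $0$ otherwise; $d_i^+$ is the outdegree of $v_i$, and $\Delta^+(D)=\mathrm{diag}(d_1^+,\dots,d_n^+)$. For $\alpha\in[0,1)$, $A_\alpha(D)=\alpha\Delta^+(D)+(1-\alpha)A(D)$. The singular values of a real square matrix $B$ are the nonnegative square roots of the eigenvalues of $BB^{T}$, counted with multiplicity. *)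

theory Defs
  imports "Jordan_Normal_Form.Char_Poly"
begin

definition digraph :: "nat \<Rightarrow> (nat \<times> nat) set \<Rightarrow> bool" where
  "digraph n Arcs \<longleftrightarrow> Arcs \<subseteq> {0..<n} \<times> {0..<n} \<and> (\<forall>i. (i, i) \<notin> Arcs)"

definition outdeg :: "(nat \<times> nat) set \<Rightarrow> nat \<Rightarrow> nat" where
  "outdeg Arcs i = card {j. (i, j) \<in> Arcs}"

definition indeg :: "(nat \<times> nat) set \<Rightarrow> nat \<Rightarrow> nat" where
  "indeg Arcs j = card {i. (i, j) \<in> Arcs}"

definition adj_mat :: "nat \<Rightarrow> (nat \<times> nat) set \<Rightarrow> real mat" where
  "adj_mat n Arcs = mat n n (\<lambda>(i, j). if (i, j) \<in> Arcs then 1 else 0)"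

definition outdeg_mat :: "nat \<Rightarrow> (nat \<times> nat) set \<Rightarrow> real mat" where
  "outdeg_mat n Arcs = mat n n (\<lambda>(i, j). if i = j then real (outdeg Arcs i) else 0)"

definition A_alpha :: "real \<Rightarrow> nat \<Rightarrow> (nat \<times> nat) set \<Rightarrow> real mat" where
  "A_alpha \<alpha> n Arcs = \<alpha> \<cdot>\<^sub>m outdeg_mat n Arcs + (1 - \<alpha>) \<cdot>\<^sub>m adj_mat n Arcs"

definition largest_singular_value :: "real mat \<Rightarrow> real" where
  "largest_singular_value B = sqrt (Max {k. eigenvalue (B * B\<^sup>T) k})"

end

theory Submission
  imports "HOL-Analysis.Function_Topology" Defs
begin


definition qf :: "nat \<Rightarrow> (nat \<Rightarrow> nat \<Rightarrow> real) \<Rightarrow> (nat \<Rightarrow> real) \<Rightarrow> real" where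
  "qf n M y = (\<Sum>i<n. \<Sum>j<n. M i j * y i * y j)"

definition nsq :: "nat \<Rightarrow> (nat \<Rightarrow> real) \<Rightarrow> real" where
  "nsq n y = (\<Sum>i<n. (y i)^2)"

lemma qf_expand:
  assumes sym: "\<forall>i<n. \<forall>j<n. M i j = M j i"
  shows "qf n M (\<lambda>i. x i + t * y i) = qf n M x + 2*t*(\<Sum>i<n. y i * (\<Sum>j<n. M i j * x j)) + t^2 * qf n M y"
proof -
  have A: "(\<Sum>i<n. \<Sum>j<n. M i j * x i * y j) = (\<Sum>i<n. y i * (\<Sum>j<n. M i j * x j))"
  proof -
    have "(\<Sum>i<n. \<Sum>j<n. M i j * x i * y j) = (\<Sum>j<n. \<Sum>i<n. M i j * x i * y j)"
      by (rule sum.swap)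
    also have "\<dots> = (\<Sum>j<n. \<Sum>i<n. M j i * x i * y j)"
      using sym by (intro sum.cong) auto
    also have "\<dots> = (\<Sum>i<n. y i * (\<Sum>j<n. M i j * x j))"
      by (simp add: sum_distrib_left mult_ac)
    finally show ?thesis .
  qed
  have B: "(\<Sum>i<n. \<Sum>j<n. M i j * y i * x j) = (\<Sum>i<n. y i * (\<Sum>j<n. M i j * x j))"
    by (simp add: sum_distrib_left mult_ac)
  have "qf n M (\<lambda>i. x i + t * y i) = (\<Sum>i<n. \<Sum>j<n. M i j * x i * x j + t * (M i j * x i * y j)
      + t * (M i j * y i * x j) + t^2 * (M i j * y i * y j))"
    unfolding qf_def by (intro sum.cong refl) (simp add: algebra_simps power2_eq_square)
  also have "\<dots> = qf n M x + t * (\<Sum>i<n. \<Sum>j<n. M i j * x i * y j) + t * (\<Sum>i<n. \<Sum>j<n. M i j * y i * x j)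
      + t^2 * qf n M y"
    unfolding qf_def by (simp add: sum.distrib sum_distrib_left)
  finally show ?thesis using A B by simp
qed

lemma nsq_expand:
  "nsq n (\<lambda>i. x i + t * y i) = nsq n x + 2*t*(\<Sum>i<n. y i * x i) + t^2 * nsq n y"
proof -
  have "nsq n (\<lambda>i. x i + t * y i) = (\<Sum>i<n. (x i)^2 + t * (y i * x i) + t * (y i * x i) + t^2 * (y i)^2)"
    unfolding nsq_def by (intro sum.cong refl) (simp add: algebra_simps power2_eq_square)
  also have "\<dots> = nsq n x + 2*t*(\<Sum>i<n. y i * x i) + t^2 * nsq n y"
    unfolding nsq_def by (simp add: sum.distrib sum_distrib_left mult_ac)
  finally show ?thesis .
qed

lemma nsq_nonneg: "nsq n y \<ge> 0" unfolding nsq_def by (simp add: sum_nonneg)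

lemma nsq_zero: "nsq n y = 0 \<Longrightarrow> i < n \<Longrightarrow> y i = 0"
  unfolding nsq_def by (subst (asm) sum_nonneg_eq_0_iff) auto

lemma rayleigh:
  fixes M :: "nat \<Rightarrow> nat \<Rightarrow> real"
  assumes n: "n \<ge> 1" and sym: "\<forall>i<n. \<forall>j<n. M i j = M j i"
  shows "\<exists>l x. nsq n x = 1 \<and> (\<forall>i<n. (\<Sum>j<n. M i j * x j) = l * x i) \<and> qf n M x = l
     \<and> (\<forall>y. qf n M y \<le> l * nsq n y)"
proof -
  define S :: "nat \<Rightarrow> real set" where "S i = (if i < n then {-1..1} else {0})" for i
  define K where "K = PiE UNIV S \<inter> {x. nsq n x = 1}"
  have "compactin (product_topology (\<lambda>i. euclidean) UNIV) (PiE UNIV S)"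
    by (subst compactin_PiE) (auto simp: S_def)
  hence c1: "compact (PiE UNIV S)" by (simp add: euclidean_product_topology)
  have cont_nsq: "continuous_on UNIV (nsq n)"
    unfolding nsq_def by (intro continuous_intros continuous_on_product_coordinates)
  have cont_qf: "continuous_on UNIV (qf n M)"
    unfolding qf_def by (intro continuous_intros continuous_on_product_coordinates)
  have "closed {x. nsq n x = (\<lambda>_. 1) x}"
    by (rule closed_Collect_eq[OF cont_nsq]) (intro continuous_intros)
  hence "compact K" unfolding K_def using c1 compact_Int_closed by auto
  define e0 :: "nat \<Rightarrow> real" where "e0 = (\<lambda>i. if i = 0 then 1 else 0)"
  have "e0 \<in> K" unfolding K_def e0_def S_def nsq_def using n
    by (auto simp: PiE_iff if_distrib[of "\<lambda>x. x^2"] cong: if_cong)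
  hence "K \<noteq> {}" by auto
  then obtain x0 where x0K: "x0 \<in> K" and mx: "\<forall>y\<in>K. qf n M y \<le> qf n M x0"
    using continuous_attains_sup[OF \<open>compact K\<close> _ continuous_on_subset[OF cont_qf]] by blast
  define l where "l = qf n M x0"
  have nx0: "nsq n x0 = 1" using x0K K_def by auto
  have bound: "qf n M y \<le> l * nsq n y" for y
  proof (cases "nsq n y = 0")
    case True
    hence "qf n M y = 0" unfolding qf_def using nsq_zero[OF True] by simp
    thus ?thesis using True by simp
  next
    case False
    hence pos: "nsq n y > 0" using nsq_nonneg[of n y] by linarith
    define t where "t = sqrt (nsq n y)"
    have tpos: "t > 0" using pos t_def by simp
    have t2: "t^2 = nsq n y" using pos t_def by simp
    define z where "z i = (if i < n then y i / t else 0)" for i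
    have yi: "\<bar>y i\<bar> \<le> t" if "i < n" for i
    proof -
      have "(y i)^2 \<le> nsq n y" unfolding nsq_def
        using that by (intro member_le_sum) auto
      hence "sqrt ((y i)^2) \<le> t" unfolding t_def by (rule real_sqrt_le_mono)
      thus ?thesis by simp
    qed
    have "z \<in> PiE UNIV S"
      using yi tpos by (auto simp: PiE_iff z_def S_def abs_le_iff divide_le_eq le_divide_eq; smt (verit))
    moreover have "nsq n z = nsq n y / t^2"
      unfolding nsq_def z_def by (simp add: sum_divide_distrib power_divide)
    hence "nsq n z = 1" using t2 pos by simp
    ultimately have "z \<in> K" unfolding K_def by auto
    hence "qf n M z \<le> l" using mx l_def by auto
    moreover have "qf n M z = qf n M y / t^2"
      unfolding qf_def z_def by (simp add: sum_divide_distrib power2_eq_square)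
    ultimately have "qf n M y / t^2 \<le> l" by simp
    thus ?thesis using t2 pos by (simp add: divide_le_eq mult.commute)
  qed
  define g where "g i = l * x0 i - (\<Sum>j<n. M i j * x0 j)" for i
  define R where "R y = l * nsq n y - qf n M y" for y
  have Rnn: "R y \<ge> 0" for y using bound[of y] R_def by simp
  define G where "G = nsq n g"
  have Rexp: "R (\<lambda>i. x0 i + t * g i) = 2 * t * G + t^2 * R g" for t
  proof -
    have "(\<Sum>i<n. g i * x0 i) * l - (\<Sum>i<n. g i * (\<Sum>j<n. M i j * x0 j)) = G"
      unfolding G_def nsq_def g_def
      by (simp add: sum_distrib_left sum_distrib_right sum_subtractf[symmetric] algebra_simps power2_eq_square)
    thus ?thesis
      unfolding R_def using qf_expand[OF sym, of x0 t g] nsq_expand[of n x0 t g] nx0 l_def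
      by (simp add: algebra_simps)
  qed
  have G0: "G = 0"
  proof (rule ccontr)
    assume "G \<noteq> 0"
    hence Gp: "G > 0" using nsq_nonneg[of n g] G_def by linarith
    define t where "t = - G / (R g + 1)"
    have Rp: "R g + 1 > 0" using Rnn[of g] by linarith
    have "0 \<le> 2 * t * G + t^2 * R g" using Rexp[of t] Rnn by metis
    hence "0 \<le> (2 * t * G + t^2 * R g) * (R g + 1)^2" using Rp by simp
    also have "(2 * t * G + t^2 * R g) * (R g + 1)^2 = -(G^2 * (R g + 2))"
    proof -
      have tt: "t * (R g + 1) = - G" unfolding t_def using Rp by simp
      have "(2 * t * G + t^2 * R g) * (R g + 1)^2 = 2 * G * (t * (R g + 1)) * (R g + 1) + (t * (R g + 1))^2 * R g"
        by (simp add: algebra_simps power2_eq_square)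
      also have "\<dots> = -(G^2 * (R g + 2))" unfolding tt by (simp add: algebra_simps power2_eq_square)
      finally show ?thesis .
    qed
    finally show False using Gp Rnn[of g] by (smt (verit) mult_pos_pos zero_less_power)
  qed
  have "\<forall>i<n. (\<Sum>j<n. M i j * x0 j) = l * x0 i"
    using nsq_zero[of n g] G0 G_def g_def by auto
  thus ?thesis using nx0 bound l_def by blast
qed



lemma wcs:
  fixes w x :: "nat \<Rightarrow> real"
  assumes "finite A" and w: "\<forall>i\<in>A. w i \<ge> 0"
  shows "(\<Sum>i\<in>A. w i * x i)^2 \<le> (\<Sum>i\<in>A. w i) * (\<Sum>i\<in>A. w i * (x i)^2)"
proof -
  have "0 \<le> (\<Sum>i\<in>A. \<Sum>j\<in>A. w i * w j * (x i - x j)^2)"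
    using w by (intro sum_nonneg) auto
  also have "(\<Sum>i\<in>A. \<Sum>j\<in>A. w i * w j * (x i - x j)^2)
     = (\<Sum>i\<in>A. \<Sum>j\<in>A. (w i * (x i)^2) * w j + w i * (w j * (x j)^2) - 2 * ((w i * x i) * (w j * x j)))"
    by (intro sum.cong refl) (simp add: algebra_simps power2_eq_square)
  also have "\<dots> = (\<Sum>i\<in>A. w i * (x i)^2) * (\<Sum>i\<in>A. w i) + (\<Sum>i\<in>A. w i) * (\<Sum>i\<in>A. w i * (x i)^2)
      - 2 * ((\<Sum>i\<in>A. w i * x i) * (\<Sum>i\<in>A. w i * x i))"
  proof -
    have s1: "(\<Sum>i\<in>A. w i * (x i)^2) * (\<Sum>i\<in>A. w i) = (\<Sum>i\<in>A. \<Sum>j\<in>A. (w i * (x i)^2) * w j)"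
      by (rule sum_product)
    have s2: "(\<Sum>i\<in>A. w i) * (\<Sum>i\<in>A. w i * (x i)^2) = (\<Sum>i\<in>A. \<Sum>j\<in>A. w i * (w j * (x j)^2))"
      by (rule sum_product)
    have s3: "2 * ((\<Sum>i\<in>A. w i * x i) * (\<Sum>i\<in>A. w i * x i)) = (\<Sum>i\<in>A. \<Sum>j\<in>A. 2 * ((w i * x i) * (w j * x j)))"
      by (subst sum_product) (simp only: sum_distrib_left)
    show ?thesis unfolding s1 s2 s3 by (simp only: sum.distrib sum_subtractf)
  qed
  finally show ?thesis by (simp add: power2_eq_square mult.commute)
qed

lemma cs1:
  fixes x :: "nat \<Rightarrow> real"
  assumes "finite A"
  shows "(\<Sum>i\<in>A. x i)^2 \<le> real (card A) * (\<Sum>i\<in>A. (x i)^2)"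
  using wcs[OF assms, of "\<lambda>_. 1" x] by simp

lemma eqcase:
  fixes x :: "nat \<Rightarrow> real"
  assumes "finite A" and N: "card A > 0" and le: "real (card A) * (\<Sum>i\<in>A. (x i)^2) \<le> (\<Sum>i\<in>A. x i)^2"
  shows "\<forall>i\<in>A. x i = (\<Sum>i\<in>A. x i) / real (card A)"
proof -
  define N where "N = real (card A)"
  define m where "m = (\<Sum>i\<in>A. x i) / N"
  have Np: "N > 0" using N N_def by simp
  have "(\<Sum>i\<in>A. (x i - m)^2) = (\<Sum>i\<in>A. (x i)^2 - 2 * m * x i + m^2)"
    by (intro sum.cong refl) (simp add: power2_eq_square algebra_simps)
  also have "\<dots> = (\<Sum>i\<in>A. (x i)^2) - 2 * m * (\<Sum>i\<in>A. x i) + N * m^2"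
    by (simp add: sum.distrib sum_subtractf sum_distrib_left N_def)
  also have "\<dots> = (\<Sum>i\<in>A. (x i)^2) - (\<Sum>i\<in>A. x i)^2 / N"
  proof -
    have "N * m^2 = (\<Sum>i\<in>A. x i)^2 / N" unfolding m_def using Np by (simp add: power2_eq_square)
    moreover have "2 * m * (\<Sum>i\<in>A. x i) = 2 * ((\<Sum>i\<in>A. x i)^2 / N)" unfolding m_def by (simp add: power2_eq_square)
    ultimately show ?thesis by linarith
  qed
  also have "\<dots> \<le> 0"
  proof -
    have "(\<Sum>i\<in>A. (x i)^2) * N \<le> (\<Sum>i\<in>A. x i)^2" using le unfolding N_def by (simp only: mult.commute)
    hence "(\<Sum>i\<in>A. (x i)^2) \<le> (\<Sum>i\<in>A. x i)^2 / N" by (simp only: pos_le_divide_eq[OF Np])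
    thus ?thesis by linarith
  qed
  finally have "(\<Sum>i\<in>A. (x i - m)^2) \<le> 0" .
  moreover have "(\<Sum>i\<in>A. (x i - m)^2) \<ge> 0" by (intro sum_nonneg) auto
  ultimately have "(\<Sum>i\<in>A. (x i - m)^2) = 0" by linarith
  hence "\<forall>i\<in>A. (x i - m)^2 = 0" by (simp add: sum_nonneg_eq_0_iff[OF assms(1)])
  hence "\<forall>i\<in>A. x i = m" by simp
  thus ?thesis unfolding m_def N_def .
qed



lemma qf_sq:
  fixes b :: "nat \<Rightarrow> nat \<Rightarrow> real"
  shows "qf n (\<lambda>i j. \<Sum>k<n. b i k * b j k) y = (\<Sum>k<n. (\<Sum>i<n. b i k * y i)^2)"
proof -
  have "qf n (\<lambda>i j. \<Sum>k<n. b i k * b j k) y = (\<Sum>i<n. \<Sum>j<n. \<Sum>k<n. (b i k * y i) * (b j k * y j))"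
    unfolding qf_def by (simp only: sum_distrib_right) (simp add: mult_ac)
  also have "\<dots> = (\<Sum>i<n. \<Sum>k<n. \<Sum>j<n. (b i k * y i) * (b j k * y j))"
    by (rule sum.cong[OF refl]) (rule sum.swap)
  also have "\<dots> = (\<Sum>k<n. \<Sum>i<n. \<Sum>j<n. (b i k * y i) * (b j k * y j))"
    by (rule sum.swap)
  also have "\<dots> = (\<Sum>k<n. (\<Sum>i<n. b i k * y i)^2)"
    by (simp add: power2_eq_square sum_product)
  finally show ?thesis .
qed

theorem lemma2p9:
  fixes n :: nat and Arcs :: "(nat \<times> nat) set" and \<alpha> :: real
  assumes "digraph n Arcs" and "n \<ge> 2" and "0 \<le> \<alpha>" and "\<alpha> < 1"
  shows "largest_singular_value (A_alpha \<alpha> n Arcs) \<ge> real (card Arcs) / real n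
    \<and> (largest_singular_value (A_alpha \<alpha> n Arcs) = real (card Arcs) / real n \<longleftrightarrow>
        (\<forall>v<n. real (outdeg Arcs v) = real (card Arcs) / real n
              \<and> real (indeg Arcs v) = real (card Arcs) / real n))"
proof -
  note dg = assms(1)[unfolded digraph_def]
  have sub: "Arcs \<subseteq> {..<n} \<times> {..<n}" using dg by auto
  have finA: "finite Arcs" using sub finite_subset by blast
  define B where "B = A_alpha \<alpha> n Arcs"
  define b where "b i j = B $$ (i, j)" for i j
  define a where "a = real (card Arcs)"
  define c where "c = a / real n"
  have npos: "real n > 0" using assms(2) by simp
  have Bc: "B \<in> carrier_mat n n"
    unfolding B_def A_alpha_def outdeg_mat_def adj_mat_def by auto
  have bij: "b i j = \<alpha> * (if i = j then real (outdeg Arcs i) else 0) + (1 - \<alpha>) * (if (i, j) \<in> Arcs then 1 else 0)"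
    if "i < n" "j < n" for i j
    unfolding b_def B_def A_alpha_def outdeg_mat_def adj_mat_def using that by simp
  have bnn: "b i j \<ge> 0" if "i < n" "j < n" for i j
    using bij[OF that] assms(3,4) by simp
  have cnt_out: "(\<Sum>j<n. (if (i, j) \<in> Arcs then 1 else 0::real)) = real (outdeg Arcs i)" for i
  proof -
    have "(\<Sum>j<n. (if (i, j) \<in> Arcs then 1 else 0::real)) = real (card {j\<in>{..<n}. (i, j) \<in> Arcs})"
      by (simp add: sum.If_cases Int_def)
    also have "{j\<in>{..<n}. (i, j) \<in> Arcs} = {j. (i, j) \<in> Arcs}" using sub by auto
    finally show ?thesis unfolding outdeg_def .
  qed
  have cnt_in: "(\<Sum>i<n. (if (i, j) \<in> Arcs then 1 else 0::real)) = real (indeg Arcs j)" for j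
  proof -
    have "(\<Sum>i<n. (if (i, j) \<in> Arcs then 1 else 0::real)) = real (card {i\<in>{..<n}. (i, j) \<in> Arcs})"
      by (simp add: sum.If_cases Int_def)
    also have "{i\<in>{..<n}. (i, j) \<in> Arcs} = {i. (i, j) \<in> Arcs}" using sub by auto
    finally show ?thesis unfolding indeg_def .
  qed
  define r where "r i = (\<Sum>j<n. b i j)" for i
  define s where "s j = (\<Sum>i<n. b i j)" for j
  have r_eq: "r i = real (outdeg Arcs i)" if "i < n" for i
  proof -
    have "r i = (\<Sum>j<n. \<alpha> * (if i = j then real (outdeg Arcs i) else 0) + (1 - \<alpha>) * (if (i, j) \<in> Arcs then 1 else 0))"
      unfolding r_def using bij that by (intro sum.cong) auto
    also have "\<dots> = \<alpha> * real (outdeg Arcs i) + (1 - \<alpha>) * real (outdeg Arcs i)"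
      using that by (simp add: sum.distrib sum_distrib_left[symmetric] cnt_out)
    finally show ?thesis by (simp add: algebra_simps)
  qed
  have s_eq: "s j = \<alpha> * real (outdeg Arcs j) + (1 - \<alpha>) * real (indeg Arcs j)" if "j < n" for j
  proof -
    have "s j = (\<Sum>i<n. \<alpha> * (if i = j then real (outdeg Arcs i) else 0) + (1 - \<alpha>) * (if (i, j) \<in> Arcs then 1 else 0))"
      unfolding s_def using bij that by (intro sum.cong) auto
    also have "\<dots> = \<alpha> * real (outdeg Arcs j) + (1 - \<alpha>) * real (indeg Arcs j)"
      using that by (simp add: sum.distrib sum_distrib_left[symmetric] cnt_in)
    finally show ?thesis .
  qed
  have sum_out: "(\<Sum>i<n. real (outdeg Arcs i)) = a"
  proof -
    have "Arcs = (SIGMA i:{..<n}. {j. (i, j) \<in> Arcs})" using sub by auto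
    hence "card Arcs = card (SIGMA i:{..<n}. {j. (i, j) \<in> Arcs})" by simp
    also have "\<dots> = (\<Sum>i<n. card {j. (i, j) \<in> Arcs})"
    proof (rule card_SigmaI)
      show "\<forall>i\<in>{..<n}. finite {j. (i, j) \<in> Arcs}"
        using sub by (auto intro: finite_subset[of _ "{..<n}"])
    qed simp
    finally show ?thesis unfolding a_def outdeg_def by simp
  qed
  have sum_r: "(\<Sum>i<n. r i) = a" using r_eq sum_out by simp
  have "(\<Sum>j<n. s j) = (\<Sum>i<n. r i)" unfolding s_def r_def by (rule sum.swap)
  hence sum_s: "(\<Sum>j<n. s j) = a" using sum_r by simp
  define Mf where "Mf i j = (\<Sum>k<n. b i k * b j k)" for i j
  define Mm where "Mm = B * B\<^sup>T"
  have Mc: "Mm \<in> carrier_mat n n" unfolding Mm_def using Bc by auto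
  have Midx: "Mm $$ (i, j) = Mf i j" if "i < n" "j < n" for i j
    unfolding Mm_def Mf_def b_def using that Bc by (simp add: scalar_prod_def atLeast0LessThan)
  have symM: "\<forall>i<n. \<forall>j<n. Mf i j = Mf j i" unfolding Mf_def by (simp add: mult.commute)
  obtain l x0 where nx0: "nsq n x0 = 1" and ev: "\<forall>i<n. (\<Sum>j<n. Mf i j * x0 j) = l * x0 i"
    and qx0: "qf n Mf x0 = l" and bnd: "\<forall>y. qf n Mf y \<le> l * nsq n y"
    using rayleigh[of n Mf, OF _ symM] assms(2) by auto
  define E where "E = {k. eigenvalue Mm k}"
  have lE: "l \<in> E"
  proof -
    have "vec n x0 \<noteq> 0\<^sub>v n"
    proof
      assume "vec n x0 = 0\<^sub>v n"
      hence "\<forall>i<n. x0 i = 0" by (metis index_vec index_zero_vec(1))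
      hence "nsq n x0 = 0" unfolding nsq_def by simp
      thus False using nx0 by simp
    qed
    moreover have "Mm *\<^sub>v vec n x0 = l \<cdot>\<^sub>v vec n x0"
    proof (rule eq_vecI)
      fix i assume "i < dim_vec (l \<cdot>\<^sub>v vec n x0)"
      hence i: "i < n" by simp
      have "(Mm *\<^sub>v vec n x0) $ i = (\<Sum>j<n. Mf i j * x0 j)"
        using i Mc Midx by (simp add: scalar_prod_def atLeast0LessThan)
      thus "(Mm *\<^sub>v vec n x0) $ i = (l \<cdot>\<^sub>v vec n x0) $ i" using ev i by simp
    qed (use Mc in simp)
    ultimately show ?thesis unfolding E_def eigenvalue_def eigenvector_def using Mc
      by (auto intro!: exI[of _ "vec n x0"])
  qed
  have Ele: "k \<le> l" if kE: "k \<in> E" for k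
  proof -
    obtain v where v: "v \<in> carrier_vec n" "v \<noteq> 0\<^sub>v n" "Mm *\<^sub>v v = k \<cdot>\<^sub>v v"
      using kE Mc unfolding E_def eigenvalue_def eigenvector_def by auto
    define y where "y i = v $ i" for i
    have eqy: "(\<Sum>j<n. Mf i j * y j) = k * y i" if "i < n" for i
    proof -
      have "(Mm *\<^sub>v v) $ i = (k \<cdot>\<^sub>v v) $ i" using v(3) by simp
      thus ?thesis using that v(1) Mc Midx unfolding y_def by (simp add: scalar_prod_def atLeast0LessThan)
    qed
    have "qf n Mf y = (\<Sum>i<n. y i * (\<Sum>j<n. Mf i j * y j))"
      unfolding qf_def by (simp add: sum_distrib_left mult_ac)
    also have "\<dots> = k * nsq n y" unfolding nsq_def using eqy
      by (simp add: sum_distrib_left power2_eq_square mult_ac)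
    finally have "k * nsq n y \<le> l * nsq n y" using bnd by metis
    moreover have "nsq n y > 0"
    proof -
      obtain i where i: "i < n" "v $ i \<noteq> 0" using v(1,2) by (metis carrier_vecD eq_vecI index_zero_vec(1) index_zero_vec(2))
      have "(y i)^2 \<le> nsq n y" unfolding nsq_def using i by (intro member_le_sum) auto
      moreover have "(y i)^2 > 0" using i y_def by simp
      ultimately show ?thesis by linarith
    qed
    ultimately show ?thesis by simp
  qed
  have finE: "finite E"
  proof -
    have "char_poly Mm \<noteq> 0" using degree_monic_char_poly[OF Mc] by auto
    hence "finite {k. poly (char_poly Mm) k = 0}" by (rule poly_roots_finite)
    moreover have "E = {k. poly (char_poly Mm) k = 0}" unfolding E_def using eigenvalue_root_char_poly[OF Mc] by auto
    ultimately show ?thesis by simp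
  qed
  have MaxE: "Max E = l" using finE lE Ele by (intro Max_eqI) auto
  have sig: "largest_singular_value (A_alpha \<alpha> n Arcs) = sqrt l"
    unfolding largest_singular_value_def B_def[symmetric] Mm_def[symmetric] E_def[symmetric] MaxE ..
  have qfM: "qf n Mf y = (\<Sum>k<n. (\<Sum>i<n. b i k * y i)^2)" for y
    unfolding Mf_def by (rule qf_sq)
  define one :: "nat \<Rightarrow> real" where "one = (\<lambda>_. 1)"
  have qf1: "qf n Mf one = (\<Sum>k<n. (s k)^2)" unfolding qfM one_def s_def by simp
  have nsq1: "nsq n one = real n" unfolding nsq_def one_def by simp
  have a_nn: "a \<ge> 0" unfolding a_def by simp
  have c_nn: "c \<ge> 0" unfolding c_def using a_nn npos by simp
  have csq: "a^2 = real n * real n * c^2" unfolding c_def using npos by (simp add: power2_eq_square)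
  have lge: "l \<ge> c^2"
  proof -
    have "a^2 \<le> real n * (\<Sum>k<n. (s k)^2)" using cs1[of "{..<n}" s] sum_s by simp
    also have "\<dots> \<le> real n * (l * real n)" using bnd qf1 nsq1 npos by (metis mult_left_mono less_imp_le)
    finally have "real n * real n * c^2 \<le> real n * real n * l" using csq by (simp add: mult_ac)
    thus ?thesis using npos by simp
  qed
  have part1: "sqrt l \<ge> c" using lge c_nn by (metis real_sqrt_le_mono real_sqrt_abs abs_of_nonneg)
  have l_nn: "l \<ge> 0" using lge by (smt (verit) zero_le_power2)
  have part2: "sqrt l = c \<longleftrightarrow> (\<forall>v<n. real (outdeg Arcs v) = c \<and> real (indeg Arcs v) = c)"
  proof
    assume sq: "sqrt l = c"
    hence lc: "l = c^2" using l_nn by (metis real_sqrt_pow2)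
    have scol: "\<forall>k\<in>{..<n}. s k = c"
    proof -
      have "real n * (\<Sum>k<n. (s k)^2) \<le> real n * (l * real n)" using bnd qf1 nsq1 npos by (metis mult_left_mono less_imp_le)
      also have "\<dots> = (\<Sum>k<n. s k)^2" using lc csq sum_s by (simp add: mult_ac)
      finally have "real (card {..<n}) * (\<Sum>k<n. (s k)^2) \<le> (\<Sum>k<n. s k)^2" by simp
      from eqcase[OF _ _ this] npos show ?thesis using sum_s c_def by simp
    qed
    have srow: "\<forall>k\<in>{..<n}. r k = c"
    proof -
      define w where "w k = (\<Sum>i<n. b i k * r i)" for k
      have zz: "nsq n r = (\<Sum>k<n. w k)"
      proof -
        have "nsq n r = (\<Sum>i<n. r i * (\<Sum>k<n. b i k))" unfolding nsq_def r_def by (simp add: power2_eq_square)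
        also have "\<dots> = (\<Sum>i<n. \<Sum>k<n. b i k * r i)" by (simp add: sum_distrib_left mult_ac)
        also have "\<dots> = (\<Sum>k<n. w k)" unfolding w_def by (rule sum.swap)
        finally show ?thesis .
      qed
      have "(nsq n r)^2 \<le> real n * (\<Sum>k<n. (w k)^2)" using cs1[of "{..<n}" w] zz by simp
      also have "(\<Sum>k<n. (w k)^2) = qf n Mf r" unfolding qfM w_def ..
      also have "real n * qf n Mf r \<le> real n * (l * nsq n r)" using bnd npos by (metis mult_left_mono less_imp_le)
      finally have hh: "(nsq n r)^2 \<le> real n * (l * nsq n r)" by simp
      have "real n * nsq n r \<le> (\<Sum>k<n. r k)^2"
      proof (cases "nsq n r = 0")
        case True thus ?thesis by simp
      next
        case False
        hence "nsq n r > 0" using nsq_nonneg[of n r] by linarith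
        hence "nsq n r \<le> real n * l" using hh by (simp add: power2_eq_square mult_ac)
        hence "real n * nsq n r \<le> real n * (real n * l)" using npos by simp
        also have "\<dots> = (\<Sum>k<n. r k)^2" using lc csq sum_r by (simp add: mult_ac)
        finally show ?thesis .
      qed
      hence "real (card {..<n}) * (\<Sum>k<n. (r k)^2) \<le> (\<Sum>k<n. r k)^2" unfolding nsq_def by simp
      from eqcase[OF _ _ this] npos show ?thesis using sum_r c_def by simp
    qed
    show "\<forall>v<n. real (outdeg Arcs v) = c \<and> real (indeg Arcs v) = c"
    proof (intro allI impI)
      fix v assume v: "v < n"
      have o: "real (outdeg Arcs v) = c" using srow r_eq v by simp
      have "\<alpha> * c + (1 - \<alpha>) * real (indeg Arcs v) = c" using scol s_eq[OF v] v o by simp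
      hence "(1 - \<alpha>) * real (indeg Arcs v) = (1 - \<alpha>) * c" by (simp add: algebra_simps)
      hence "real (indeg Arcs v) = c" using assms(4) by simp
      thus "real (outdeg Arcs v) = c \<and> real (indeg Arcs v) = c" using o by simp
    qed
  next
    assume reg: "\<forall>v<n. real (outdeg Arcs v) = c \<and> real (indeg Arcs v) = c"
    have sc: "s k = c" if "k < n" for k using s_eq reg that by (simp add: algebra_simps)
    have rc: "r k = c" if "k < n" for k using r_eq reg that by simp
    have "l = (\<Sum>k<n. (\<Sum>i<n. b i k * x0 i)^2)" using qx0 qfM by simp
    also have "\<dots> \<le> (\<Sum>k<n. s k * (\<Sum>i<n. b i k * (x0 i)^2))"
      unfolding s_def by (intro sum_mono wcs) (auto intro: bnn)
    also have "\<dots> = (\<Sum>k<n. \<Sum>i<n. c * (b i k * (x0 i)^2))"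
      using sc by (simp add: sum_distrib_left)
    also have "\<dots> = (\<Sum>i<n. \<Sum>k<n. c * (b i k * (x0 i)^2))" by (rule sum.swap)
    also have "\<dots> = c * (\<Sum>i<n. (x0 i)^2 * r i)"
      unfolding r_def by (simp add: sum_distrib_left sum_distrib_right mult_ac)
    also have "\<dots> = c * c" using rc nx0 unfolding nsq_def by (simp add: sum_distrib_right[symmetric])
    finally have "l \<le> c^2" by (simp add: power2_eq_square)
    hence "l = c^2" using lge by simp
    thus "sqrt l = c" using c_nn by simp
  qed
  show ?thesis unfolding sig using part1 part2 unfolding c_def a_def by simp
qed

end
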